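(* Let $\{\rho_\theta\}$ be a two-parameter qubit model satisfying the regularity conditions, with Bloch vectors $\mathbf s_\theta$, and let $W=[w_{ij}]$ be a $2\times 2$ real positive definite matrix. Then \[ C_\theta^H[W]=\min_{\vec\xi\in\mathbb R^2}h_\theta[\vec\xi|W], \] where, for $\vec\xi=(\xi^1,\xi^2)^T$, \[ h_\theta[\vec\xi|W]=\mathrm{Tr}(WG_\theta^{-1})+\langle\boldsymbol\ell_\theta^\perp,Q_\theta^{-1}\boldsymbol\ell_\theta^\perp\rangle(\vec\xi|W\vec\xi)+2\sqrt{\det W}\,\Big|\langle\boldsymbol\ell_\theta^1,F_\theta\boldsymbol\ell_\theta^2\rangle+(1-s_\theta^2)(\vec\gamma_\theta|\vec\xi)\Big|. \]
   Context: Two-parameter qubit model: density matrices $\rho_\theta=\tfrac12(I+\mathbf s_\theta\cdot\boldsymbol\sigma)$ on $\mathbb C^2$, $\theta=(\theta^1,\theta^2)\in\Theta\subset\mathbb R^2$ open, $\boldsymbol\sigma$ the Pauli matrices, with Bloch vector $\mathbf s_\theta\in\mathbb R^3$, $s_\theta=|\mathbf s_\theta|<1$ (regularity: full rank, smooth dependence on $\theta$, $\partial_1\rho_\theta,\partial_2\rho_\theta$ linearly independent, $\partial_i=\partial/\partial\theta^i$). $\langle\mathbf a,\mathbf b\rangle=\sum_i\bar a_ib_i$ on $\mathbb C^3$, $(\vec a|\vec b)=a_1b_1+a_2b_2$ on $\mathbb R^2$. $Q_\theta=\mathbb 1+\frac{|\mathbf s_\theta\rangle\langle\mathbf s_\theta|}{1-s_\theta^2}$,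 so $Q_\theta^{-1}=\mathbb 1-|\mathbf s_\theta\rangle\langle\mathbf s_\theta|$; $F_\theta\mathbf a=\mathbf s_\theta\times\mathbf a$. SLD Bloch vectors $\boldsymbol\ell_{\theta,i}=Q_\theta\partial_i\mathbf s_\theta$; SLD Fisher matrix $G_\theta=[g_{\theta,ij}]$, $g_{\theta,ij}=\langle\partial_i\mathbf s_\theta,Q_\theta\partial_j\mathbf s_\theta\rangle$ (equal to the usual SLD Fisher information $\mathrm{tr}(\rho_\theta\tfrac12\{L_{\theta,i},L_{\theta,j}\})$); SLD dual Bloch vectors $\boldsymbol\ell_\theta^i=\sum_j(G_\theta^{-1})^{ji}\boldsymbol\ell_{\theta,j}$; $\boldsymbol\ell_\theta^\perp=\partial_1\mathbf s_\theta\times\partial_2\mathbf s_\theta$; $\gamma_{\theta,i}=\langle\mathbf s_\theta,\boldsymbol\ell_{\theta,i}\rangle$, $\vec\gamma_\theta=(\gamma_{\theta,1},\gamma_{\theta,2})^T$. Holevo bound: $C_\theta^H[W]=\min_{\vec X}\{\mathrm{Tr}(W\,\mathrm{Re}\,Z_\theta[\vec X])+\mathrm{TrAbs}(W\,\mathrm{Im}\,Z_\theta[\vec X])\}$ over pairs $\vec X=(X^1,X^2)$ of hermitian operators with $\mathrm{tr}(\rho_\theta X^i)=0$, $\mathrm{tr}(\partial_i\rho_\theta X^j)=\delta^j_i$, where $Z_\theta[\vec X]=[\mathrm{tr}(\rho_\theta X^jX^i)]_{i,j}$ and $\mathrm{TrAbs}$ of a diagonalizable matrix is the sum of absolute values of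 its eigenvalues. *)

theory Defs
  imports "HOL-Analysis.Analysis"
begin

definition pauli :: "3 \<Rightarrow> complex^2^2" where
  "pauli k =
     (if k = 1 then (\<chi> i j. if i \<noteq> j then 1 else 0)
      else if k = 2 then (\<chi> i j. if i = 1 \<and> j = 2 then - \<i> else if i = 2 \<and> j = 1 then \<i> else 0)
      else (\<chi> i j. if i = j then (if i = 1 then 1 else -1) else 0))"

definition bloch_rho :: "real^3 \<Rightarrow> complex^2^2" where
  "bloch_rho s = (1/2::real) *\<^sub>R (mat 1 + (\<Sum>k\<in>UNIV. (s $ k) *\<^sub>R pauli k))"

definition hermitian2 :: "complex^2^2 \<Rightarrow> bool" where
  "hermitian2 X \<longleftrightarrow> (\<forall>i j. X $ i $ j = cnj (X $ j $ i))"

definition pderiv2 :: "(real^2 \<Rightarrow> 'b::real_normed_vector) \<Rightarrow> real^2 \<Rightarrow> 2 \<Rightarrow> 'b" where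
  "pderiv2 f \<theta> i = frechet_derivative f (at \<theta>) (axis i 1)"

text \<open>Sum of absolute values of the (complex) eigenvalues, counted with multiplicity,
  of a real 2x2 matrix: the eigenvalues are the roots of x^2 - tr A x + det A.\<close>
definition TrAbs2 :: "real^2^2 \<Rightarrow> real" where
  "TrAbs2 A = (let t = complex_of_real (trace A);
                   D = complex_of_real (trace A ^ 2 - 4 * det A)
               in cmod ((t + csqrt D) / 2) + cmod ((t - csqrt D) / 2))"

definition Zmat :: "complex^2^2 \<Rightarrow> (2 \<Rightarrow> complex^2^2) \<Rightarrow> complex^2^2" where
  "Zmat \<rho> X = (\<chi> i j. trace (\<rho> ** X j ** X i))"

definition holevo_feasible :: "complex^2^2 \<Rightarrow> (2 \<Rightarrow> complex^2^2) \<Rightarrow> (2 \<Rightarrow> complex^2^2) \<Rightarrow> bool" where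
  "holevo_feasible \<rho> d\<rho> X \<longleftrightarrow>
     (\<forall>i. hermitian2 (X i)) \<and> (\<forall>i. trace (\<rho> ** X i) = 0) \<and>
     (\<forall>i j. trace (d\<rho> i ** X j) = (if i = j then 1 else 0))"

definition holevo_obj :: "real^2^2 \<Rightarrow> complex^2^2 \<Rightarrow> (2 \<Rightarrow> complex^2^2) \<Rightarrow> real" where
  "holevo_obj W \<rho> X =
     trace (W ** (\<chi> i j. Re (Zmat \<rho> X $ i $ j))) + TrAbs2 (W ** (\<chi> i j. Im (Zmat \<rho> X $ i $ j)))"

text \<open>C^H[W] (the minimum, written as an infimum; attainment is part of the theorem).\<close>
definition holevo_bound :: "real^2^2 \<Rightarrow> complex^2^2 \<Rightarrow> (2 \<Rightarrow> complex^2^2) \<Rightarrow> real" where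
  "holevo_bound W \<rho> d\<rho> = Inf {holevo_obj W \<rho> X | X. holevo_feasible \<rho> d\<rho> X}"

definition Qop :: "real^3 \<Rightarrow> real^3 \<Rightarrow> real^3" where
  "Qop s a = a + ((s \<bullet> a) / (1 - (norm s)^2)) *\<^sub>R s"

definition Qinv :: "real^3 \<Rightarrow> real^3 \<Rightarrow> real^3" where
  "Qinv s a = a - (s \<bullet> a) *\<^sub>R s"

definition Fop :: "real^3 \<Rightarrow> real^3 \<Rightarrow> real^3" where
  "Fop s a = cross3 s a"

text \<open>SLD Bloch vectors, Fisher matrix, dual vectors, etc., in terms of s = s_theta and
  ds i = partial_i s_theta.\<close>
definition sld :: "real^3 \<Rightarrow> (2 \<Rightarrow> real^3) \<Rightarrow> 2 \<Rightarrow> real^3" where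
  "sld s ds i = Qop s (ds i)"

definition fisherG :: "real^3 \<Rightarrow> (2 \<Rightarrow> real^3) \<Rightarrow> real^2^2" where
  "fisherG s ds = (\<chi> i j. ds i \<bullet> Qop s (ds j))"

definition sld_dual :: "real^3 \<Rightarrow> (2 \<Rightarrow> real^3) \<Rightarrow> 2 \<Rightarrow> real^3" where
  "sld_dual s ds i = (\<Sum>j\<in>UNIV. (matrix_inv (fisherG s ds) $ j $ i) *\<^sub>R sld s ds j)"

definition lperp :: "(2 \<Rightarrow> real^3) \<Rightarrow> real^3" where
  "lperp ds = cross3 (ds 1) (ds 2)"

definition gammav :: "real^3 \<Rightarrow> (2 \<Rightarrow> real^3) \<Rightarrow> real^2" where
  "gammav s ds = (\<chi> i. s \<bullet> sld s ds i)"

definition hfun :: "real^3 \<Rightarrow> (2 \<Rightarrow> real^3) \<Rightarrow> real^2^2 \<Rightarrow> real^2 \<Rightarrow> real" where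
  "hfun s ds W \<xi> =
     trace (W ** matrix_inv (fisherG s ds))
     + (lperp ds \<bullet> Qinv s (lperp ds)) * (\<xi> \<bullet> (W *v \<xi>))
     + 2 * sqrt (det W) *
       \<bar>sld_dual s ds 1 \<bullet> Fop s (sld_dual s ds 2) + (1 - (norm s)^2) * (gammav s ds \<bullet> \<xi>)\<bar>"

end

theory Submission imports Defs begin

definition bl :: "real \<Rightarrow> real^3 \<Rightarrow> complex^2^2" where
  "bl a v = a *\<^sub>R mat 1 + (\<Sum>k\<in>UNIV. (v $ k) *\<^sub>R pauli k)"

lemma bl_entries:
  "bl a v $ 1 $ 1 = complex_of_real (a + v$3)"
  "bl a v $ 1 $ 2 = Complex (v$1) (- v$2)"
  "bl a v $ 2 $ 1 = Complex (v$1) (v$2)"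
  "bl a v $ 2 $ 2 = complex_of_real (a - v$3)"
  by (simp_all add: bl_def pauli_def sum_3 mat_def complex_eq_iff)

lemma rho_bl: "bloch_rho s = (1/2::real) *\<^sub>R bl 1 s"
  by (simp add: bloch_rho_def bl_def)

lemma trace2: "trace (M::complex^2^2) = M$1$1 + M$2$2"
  by (simp add: trace_def sum_2)

lemma trace2': "trace (M::real^2^2) = M$1$1 + M$2$2"
  by (simp add: trace_def sum_2)

lemma trace_rho_bl2: "trace (bloch_rho s ** bl b v ** bl c w) =
   Complex (b*c + b*(s \<bullet> w) + c*(s \<bullet> v) + v \<bullet> w) (s \<bullet> cross3 v w)"
  unfolding rho_bl trace2
  by (simp add: matrix_matrix_mult_def sum_2 bl_entries complex_eq_iff inner_vec_def sum_3
      cross_components algebra_simps vector_scaleR_component)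

lemma trace_rho_bl: "trace (bloch_rho s ** bl a v) = complex_of_real (a + s \<bullet> v)"
  unfolding rho_bl trace2
  by (simp add: matrix_matrix_mult_def sum_2 bl_entries complex_eq_iff inner_vec_def sum_3
      algebra_simps vector_scaleR_component)

lemma trace_bl0_bl: "trace (((1/2::real) *\<^sub>R bl 0 d) ** bl a v) = complex_of_real (d \<bullet> v)"
  unfolding trace2
  by (simp add: matrix_matrix_mult_def sum_2 bl_entries complex_eq_iff inner_vec_def sum_3
      algebra_simps vector_scaleR_component)

lemma hermitian_bl: "hermitian2 (bl a v)"
  unfolding hermitian2_def forall_2 by (simp add: bl_entries complex_eq_iff)

lemma hermitian_ex: assumes "hermitian2 X" shows "\<exists>a v. X = bl a v"
proof -
  from assms have h: "Im (X$1$1) = 0" "Im (X$2$2) = 0" "X$2$1 = cnj (X$1$2)"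
    unfolding hermitian2_def by (metis cnj.sel(2) neg_equal_zero)+
  let ?a = "Re (X$1$1 + X$2$2) / 2"
  let ?v = "vector [Re (X$1$2), - Im (X$1$2), Re (X$1$1 - X$2$2)/2] :: real^3"
  have "X = bl ?a ?v"
    unfolding vec_eq_iff forall_2 using h by (simp add: bl_entries complex_eq_iff field_simps)
  then show ?thesis by blast
qed

lemma TrAbs2_skew:
  fixes B :: "real^2^2"
  assumes "trace B = 0" "det B = c^2 * D" "D \<ge> 0"
  shows "TrAbs2 B = 2 * sqrt D * \<bar>c\<bar>"
proof -
  have gen: "cmod ((0 + r)/2) + cmod ((0 - r)/2) = cmod r" for r :: complex
    by (simp add: norm_divide)
  have "TrAbs2 B = cmod (csqrt (complex_of_real (0 ^ 2 - 4 * det B)))"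
    unfolding TrAbs2_def Let_def assms(1) of_real_0 gen ..
  also have "\<dots> = sqrt \<bar>0 ^ 2 - 4 * det B\<bar>"
    by (simp only: norm_csqrt norm_of_real)
  also have "\<dots> = sqrt (4 * c^2 * D)"
    using assms(3) by (simp add: abs_mult assms(2))
  also have "\<dots> = 2 * sqrt D * \<bar>c\<bar>"
    by (simp add: real_sqrt_mult)
  finally show ?thesis .
qed

lemma obj_formula:
  assumes W: "transpose W = W" and D: "det W \<ge> 0"
    and X: "\<And>i. X i = bl (-(s \<bullet> v i)) (v i)"
  shows "holevo_obj W (bloch_rho s) X =
    (\<Sum>i\<in>UNIV. \<Sum>k\<in>UNIV. W$i$k * (v k \<bullet> Qinv s (v i)))
    + 2 * sqrt (det W) * \<bar>s \<bullet> cross3 (v 1) (v 2)\<bar>"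
proof -
  have Z: "Zmat (bloch_rho s) X $ i $ j =
     Complex (v j \<bullet> v i - (s \<bullet> v i) * (s \<bullet> v j)) (s \<bullet> cross3 (v j) (v i))" for i j
    unfolding Zmat_def using X by (simp add: trace_rho_bl2 algebra_simps inner_commute)
  have Re: "trace (W ** (\<chi> i j. Re (Zmat (bloch_rho s) X $ i $ j)))
       = (\<Sum>i\<in>UNIV. \<Sum>k\<in>UNIV. W$i$k * (v k \<bullet> Qinv s (v i)))"
  proof -
    have e: "v i \<bullet> v k - (s \<bullet> v k) * (s \<bullet> v i) = v k \<bullet> Qinv s (v i)" for i k
      by (simp add: Qinv_def inner_diff_right inner_commute)
    show ?thesis
      unfolding trace_def matrix_matrix_mult_def by (simp add: Z e)
  qed
  let ?c = "s \<bullet> cross3 (v 1) (v 2)"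
  let ?B = "W ** (\<chi> i j. Im (Zmat (bloch_rho s) X $ i $ j))"
  have W12: "W$1$2 = W$2$1" using arg_cong[OF W, of "\<lambda>M. M$1$2"] by (simp add: transpose_def)
  have c21: "s \<bullet> cross3 (v 2) (v 1) = - ?c"
    by (subst cross_skew) simp
  have tr: "trace ?B = 0"
    by (simp add: Z trace2' matrix_matrix_mult_def sum_2 c21 W12)
  have dt: "det ?B = ?c^2 * det W"
    by (simp add: Z det_2 matrix_matrix_mult_def sum_2 c21 W12 power2_eq_square algebra_simps)
  show ?thesis
    unfolding holevo_obj_def Re TrAbs2_skew[OF tr dt D] by simp
qed

lemma Qop_inner: "x \<bullet> Qop s y = x \<bullet> y + (s \<bullet> x) * (s \<bullet> y) / (1 - (norm s)^2)"
  by (simp add: Qop_def inner_add_right inner_commute)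

lemma Qinv_sym: "x \<bullet> Qinv s y = Qinv s x \<bullet> y"
  by (simp add: Qinv_def inner_diff_left inner_diff_right inner_commute)

lemma Qinv_add: "Qinv s (x + y) = Qinv s x + Qinv s y"
  by (simp add: Qinv_def inner_add_right algebra_simps)

lemma Qinv_scale: "Qinv s (c *\<^sub>R x) = c *\<^sub>R Qinv s x"
  by (simp add: Qinv_def algebra_simps)

lemma Qinv_Qop: assumes "norm s < 1" shows "Qinv s (Qop s x) = x"
proof -
  have r: "1 - (norm s)^2 > 0" using assms
    by (metis abs_norm_cancel abs_square_less_1 diff_gt_0_iff_gt)
  have ss: "s \<bullet> s = (norm s)^2" by (simp add: power2_norm_eq_inner)
  have "s \<bullet> Qop s x = (s \<bullet> x) / (1 - (norm s)^2)"
    using r by (simp add: Qop_inner ss field_simps)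
  then show ?thesis using r
    by (simp add: Qinv_def Qop_def scaleR_add_left[symmetric] field_simps)
qed

lemma s_Qop: assumes "norm s < 1" shows "(1 - (norm s)^2) * (s \<bullet> Qop s x) = s \<bullet> x"
proof -
  have r: "1 - (norm s)^2 > 0" using assms
    by (metis abs_norm_cancel abs_square_less_1 diff_gt_0_iff_gt)
  have ss: "s \<bullet> s = (norm s)^2" by (simp add: power2_norm_eq_inner)
  show ?thesis using r by (simp add: Qop_inner ss field_simps)
qed

lemma Qop_pos: assumes "norm s < 1" shows "x \<bullet> Qop s x \<ge> x \<bullet> x"
proof -
  have r: "1 - (norm s)^2 > 0" using assms
    by (metis abs_norm_cancel abs_square_less_1 diff_gt_0_iff_gt)
  show ?thesis using r by (simp add: Qop_inner)
qed

lemma inner2: "(x::real^2) \<bullet> y = x$1 * y$1 + x$2 * y$2"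
  by (simp add: inner_vec_def sum_2)

context
  fixes s :: "real^3" and d :: "2 \<Rightarrow> real^3"
  assumes ns: "norm s < 1"
    and ind: "\<forall>a b::real. a *\<^sub>R d 1 + b *\<^sub>R d 2 = 0 \<longrightarrow> a = 0 \<and> b = 0"
begin

lemma G_inv: "invertible (fisherG s d)"
proof -
  have "fisherG s d *v x = 0 \<Longrightarrow> x = 0" for x
  proof -
    assume g: "fisherG s d *v x = 0"
    define u where "u = x$1 *\<^sub>R d 1 + x$2 *\<^sub>R d 2"
    have "x \<bullet> (fisherG s d *v x) = u \<bullet> Qop s u"
      by (simp add: u_def inner2 sum_2 matrix_vector_mult_def fisherG_def Qop_inner
          inner_add_left inner_add_right inner_commute algebra_simps add_divide_distrib)
    then have "u \<bullet> Qop s u = 0" using g by simp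
    then have "u \<bullet> u \<le> 0" using Qop_pos[OF ns, of u] by simp
    then have "u = 0" by (metis inner_eq_zero_iff inner_ge_zero order_antisym)
    then have "x$1 = 0 \<and> x$2 = 0" using ind[rule_format, of "x$1" "x$2"] u_def by simp
    then show "x = 0" by (simp add: vec_eq_iff forall_2)
  qed
  then show ?thesis
    unfolding invertible_left_inverse matrix_left_invertible_ker by blast
qed

lemma G_Gi: "fisherG s d ** matrix_inv (fisherG s d) = mat 1"
  using G_inv unfolding invertible_def matrix_inv_def by (rule someI2_ex) auto

lemma d_l: "d i \<bullet> sld_dual s d j = (if i = j then 1 else 0)"
proof -
  have "d i \<bullet> sld_dual s d j = (fisherG s d ** matrix_inv (fisherG s d)) $ i $ j"
    by (simp add: sld_dual_def sld_def inner_sum_right fisherG_def matrix_matrix_mult_def mult.commute)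
  then show ?thesis by (simp add: G_Gi mat_def)
qed

lemma Qinv_l: "Qinv s (sld_dual s d j) = (\<Sum>k\<in>UNIV. matrix_inv (fisherG s d) $ k $ j *\<^sub>R d k)"
  by (simp add: sld_dual_def sld_def sum_2 Qinv_add Qinv_scale Qinv_Qop[OF ns])

lemma l_Qinv_l: "sld_dual s d k \<bullet> Qinv s (sld_dual s d i) = matrix_inv (fisherG s d) $ k $ i"
  unfolding Qinv_l using exhaust_2[of k]
  by (auto simp: sum_2 inner_add_right inner_commute[of "sld_dual s d k"] d_l)

lemma l_Qinv_n: "sld_dual s d k \<bullet> Qinv s (lperp d) = 0"
  unfolding Qinv_sym Qinv_l
  by (simp add: sum_2 inner_add_left lperp_def dot_cross_self)

lemma n_Qinv_l: "lperp d \<bullet> Qinv s (sld_dual s d k) = 0"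
  using l_Qinv_n by (simp add: Qinv_sym inner_commute)

lemma n_nz: "lperp d \<noteq> 0"
proof
  assume n: "lperp d = 0"
  have "cross3 (d 1) (cross3 (d 1) (d 2)) = 0" using n by (simp add: lperp_def)
  then have "(d 1 \<bullet> d 2) *\<^sub>R d 1 + (- (d 1 \<bullet> d 1)) *\<^sub>R d 2 = 0"
    by (simp add: Lagrange)
  then have "d 1 \<bullet> d 2 = 0 \<and> - (d 1 \<bullet> d 1) = 0" using ind by blast
  then have "d 1 \<bullet> d 1 = 0" by simp
  then have "1 *\<^sub>R d 1 + 0 *\<^sub>R d 2 = 0" by simp
  then show False using ind[rule_format, of 1 0] by simp
qed

lemma perp_par: assumes "d 1 \<bullet> u = 0" "d 2 \<bullet> u = 0"
  shows "u = ((lperp d \<bullet> u) / (lperp d \<bullet> lperp d)) *\<^sub>R lperp d"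
proof -
  let ?n = "lperp d"
  have "cross3 ?n u = - cross3 u ?n" by (rule cross_skew)
  also have "\<dots> = 0" using assms by (simp add: lperp_def Lagrange inner_commute)
  finally have "cross3 ?n (cross3 ?n u) = 0" by simp
  then have "(?n \<bullet> u) *\<^sub>R ?n = (?n \<bullet> ?n) *\<^sub>R u" by (simp add: Lagrange)
  moreover have "?n \<bullet> ?n \<noteq> 0" using n_nz by simp
  ultimately have "u = (1 / (?n \<bullet> ?n)) *\<^sub>R ((?n \<bullet> u) *\<^sub>R ?n)"
    by simp
  then show ?thesis by simp
qed

lemma imag_part:
  "s \<bullet> cross3 (sld_dual s d 1 + \<xi>$1 *\<^sub>R lperp d) (sld_dual s d 2 + \<xi>$2 *\<^sub>R lperp d)
   = - (sld_dual s d 1 \<bullet> Fop s (sld_dual s d 2) + (1 - (norm s)^2) * (gammav s d \<bullet> \<xi>))"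
proof -
  let ?l = "sld_dual s d" and ?n = "lperp d"
  have dl: "?l j \<bullet> d i = (if i = j then 1 else 0)" for i j
    using d_l[of i j] by (simp add: inner_commute)
  have c1: "cross3 (?l 1) ?n = - d 2"
    by (simp add: lperp_def Lagrange dl)
  have c2: "cross3 ?n (?l 2) = - d 1"
    by (subst cross_skew) (simp add: lperp_def Lagrange dl)
  have t: "s \<bullet> cross3 (?l 1) (?l 2) = - (?l 1 \<bullet> Fop s (?l 2))"
    using cross_triple[of "?l 1" "?l 2" s] cross_skew[of "?l 2" s]
    by (simp add: Fop_def inner_commute)
  have g: "(1 - (norm s)^2) * (gammav s d \<bullet> \<xi>) = \<xi>$1 * (s \<bullet> d 1) + \<xi>$2 * (s \<bullet> d 2)"
  proof -
    have "(1 - (norm s)^2) * (gammav s d \<bullet> \<xi>) = \<xi>$1 * ((1 - (norm s)^2) * (s \<bullet> Qop s (d 1)))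
       + \<xi>$2 * ((1 - (norm s)^2) * (s \<bullet> Qop s (d 2)))"
      by (simp add: gammav_def sld_def inner2 algebra_simps)
    then show ?thesis unfolding s_Qop[OF ns] .
  qed
  have lhs: "s \<bullet> cross3 (?l 1 + \<xi>$1 *\<^sub>R ?n) (?l 2 + \<xi>$2 *\<^sub>R ?n)
     = s \<bullet> cross3 (?l 1) (?l 2) - \<xi>$1 * (s \<bullet> d 1) - \<xi>$2 * (s \<bullet> d 2)"
    by (simp add: cross_add_left cross_add_right cross_mult_left cross_mult_right c1 c2
        inner_add_right algebra_simps)
  show ?thesis unfolding lhs t g by simp
qed

lemma real_part:
  "(\<Sum>i\<in>UNIV. \<Sum>k\<in>UNIV. W$i$k *
      ((sld_dual s d k + \<xi>$k *\<^sub>R lperp d) \<bullet> Qinv s (sld_dual s d i + \<xi>$i *\<^sub>R lperp d)))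
   = trace (W ** matrix_inv (fisherG s d)) + (lperp d \<bullet> Qinv s (lperp d)) * (\<xi> \<bullet> (W *v \<xi>))"
proof -
  have e: "(sld_dual s d k + \<xi>$k *\<^sub>R lperp d) \<bullet> Qinv s (sld_dual s d i + \<xi>$i *\<^sub>R lperp d)
     = matrix_inv (fisherG s d) $ k $ i + \<xi>$k * \<xi>$i * (lperp d \<bullet> Qinv s (lperp d))" for i k
    by (simp add: Qinv_add Qinv_scale inner_add_left inner_add_right l_Qinv_l l_Qinv_n n_Qinv_l)
  show ?thesis unfolding e
    by (simp add: sum_2 trace_def matrix_matrix_mult_def matrix_vector_mult_def inner2 algebra_simps)
qed

end


lemma min_exists:
  fixes f :: "real^2 \<Rightarrow> real"
  assumes c: "continuous_on UNIV f" and b: "\<And>x. f x \<ge> A + B * (norm x)^2" and B: "B > 0"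
  shows "\<exists>x0. \<forall>x. f x0 \<le> f x"
proof -
  let ?K = "{x. f x \<le> f 0}"
  have cl: "closed ?K" by (rule closed_Collect_le[OF c]) simp
  have "?K \<subseteq> cball 0 (sqrt ((f 0 - A) / B))"
  proof
    fix x assume "x \<in> ?K"
    then have "A + B * (norm x)^2 \<le> f 0" using b[of x] by simp
    then have "(norm x)^2 \<le> (f 0 - A) / B" using B by (simp add: field_simps)
    then have "norm x \<le> sqrt ((f 0 - A) / B)" using real_le_rsqrt by blast
    then show "x \<in> cball 0 (sqrt ((f 0 - A) / B))" by simp
  qed
  then have "bounded ?K" using bounded_cball bounded_subset by blast
  then have "compact ?K" using cl compact_eq_bounded_closed by blast
  moreover have "?K \<noteq> {}" by auto
  moreover have "continuous_on ?K f" using c continuous_on_subset by blast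
  ultimately obtain x0 where x0: "x0 \<in> ?K" "\<forall>y\<in>?K. f x0 \<le> f y"
    using continuous_attains_inf by blast
  have "f x0 \<le> f x" for x
    using x0 by (cases "x \<in> ?K") auto
  then show ?thesis by blast
qed

lemma W_facts:
  fixes W :: "real^2^2"
  assumes W: "transpose W = W" and pd: "\<forall>x::real^2. x \<noteq> 0 \<longrightarrow> x \<bullet> (W *v x) > 0"
  shows "det W > 0" "W$1$1 > 0" "W$2$2 > 0"
    "\<And>x. (det W / (W$1$1 + W$2$2)) * (norm x)^2 \<le> x \<bullet> (W *v x)"
proof -
  have W12: "W$1$2 = W$2$1" using arg_cong[OF W, of "\<lambda>M. M$1$2"] by (simp add: transpose_def)
  have q: "x \<bullet> (W *v x) = W$1$1 * x$1^2 + 2 * W$1$2 * x$1 * x$2 + W$2$2 * x$2^2" for x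
    by (simp add: inner2 matrix_vector_mult_def sum_2 W12 power2_eq_square algebra_simps)
  have a1: "(axis 1 1 :: real^2) \<noteq> 0" "(axis 2 1 :: real^2) \<noteq> 0" by (simp_all add: axis_eq_0_iff)
  show w1: "W$1$1 > 0" using pd a1(1) q[of "axis 1 1"] by (auto simp: axis_def)
  show w2: "W$2$2 > 0" using pd a1(2) q[of "axis 2 1"] by (auto simp: axis_def)
  let ?y = "vector [W$2$2, - W$1$2] :: real^2"
  have "?y \<noteq> 0" using w2 by (auto simp: vec_eq_iff forall_2)
  then have "?y \<bullet> (W *v ?y) > 0" using pd by blast
  then have "W$2$2 * det W > 0" unfolding q det_2 W12
    by (simp add: power2_eq_square algebra_simps)
  then show dW: "det W > 0" using w2 by (simp add: zero_less_mult_iff)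
  fix x :: "real^2"
  have n2: "(norm x)^2 = x$1^2 + x$2^2" by (simp only: power2_norm_eq_inner) (simp add: inner2 power2_eq_square)
  have "(W$1$1 + W$2$2) * (x \<bullet> (W *v x)) - det W * (norm x)^2
      = (W$1$1 * x$1 + W$1$2 * x$2)^2 + (W$1$2 * x$1 + W$2$2 * x$2)^2"
    unfolding q n2 det_2 W12 by (simp add: power2_eq_square algebra_simps)
  then have "det W * (norm x)^2 \<le> (W$1$1 + W$2$2) * (x \<bullet> (W *v x))"
    by (metis add_nonneg_nonneg diff_ge_0_iff_ge zero_le_power2)
  then show "(det W / (W$1$1 + W$2$2)) * (norm x)^2 \<le> x \<bullet> (W *v x)"
    using w1 w2 by (simp add: field_simps)
qed

lemma hfun_cont: "continuous_on UNIV (hfun s d W)"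
  unfolding hfun_def by (intro continuous_intros)

lemma N_pos: assumes "norm s < 1" "n \<noteq> 0" shows "n \<bullet> Qinv s n > 0"
proof -
  have "(s \<bullet> n)^2 \<le> (s \<bullet> s) * (n \<bullet> n)" by (rule Cauchy_Schwarz_ineq)
  moreover have "s \<bullet> s < 1"
  proof -
    have "(norm s)^2 < 1" using assms(1) by (metis abs_norm_cancel abs_square_less_1)
    then show ?thesis by (simp add: power2_norm_eq_inner)
  qed
  moreover have "n \<bullet> n > 0" using assms(2) by simp
  ultimately have "(s \<bullet> n)^2 < n \<bullet> n"
    by (smt (verit) mult_less_cancel_right2)
  then show ?thesis by (simp add: Qinv_def inner_diff_right power2_eq_square inner_commute)
qed


lemma obj_eq_hfun:
  assumes ns: "norm s < 1"
    and ind: "\<forall>a b::real. a *\<^sub>R d 1 + b *\<^sub>R d 2 = 0 \<longrightarrow> a = 0 \<and> b = 0"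
    and W: "transpose W = W" and D: "det W \<ge> 0"
    and X: "\<And>i. X i = bl (-(s \<bullet> (sld_dual s d i + \<xi>$i *\<^sub>R lperp d))) (sld_dual s d i + \<xi>$i *\<^sub>R lperp d)"
  shows "holevo_obj W (bloch_rho s) X = hfun s d W \<xi>"
proof -
  have "holevo_obj W (bloch_rho s) X =
    (\<Sum>i\<in>UNIV. \<Sum>k\<in>UNIV. W$i$k * ((sld_dual s d k + \<xi>$k *\<^sub>R lperp d) \<bullet> Qinv s (sld_dual s d i + \<xi>$i *\<^sub>R lperp d)))
    + 2 * sqrt (det W) * \<bar>s \<bullet> cross3 (sld_dual s d 1 + \<xi>$1 *\<^sub>R lperp d) (sld_dual s d 2 + \<xi>$2 *\<^sub>R lperp d)\<bar>"
    by (rule obj_formula[OF W D X])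
  also have "\<dots> = hfun s d W \<xi>"
    unfolding real_part[OF ns ind] imag_part[OF ns ind] hfun_def abs_minus_cancel by simp
  finally show ?thesis .
qed

lemma bl0_linear: "linear (\<lambda>y. (1/2::real) *\<^sub>R bl 0 y)"
  by (rule linearI) (simp_all add: bl_def sum.distrib scaleR_add_left scaleR_add_right
      scaleR_sum_right)

lemma rho_split: "bloch_rho y = (1/2::real) *\<^sub>R mat 1 + (1/2::real) *\<^sub>R bl 0 y"
  by (simp add: bloch_rho_def bl_def scaleR_add_right)

lemma deriv_rho:
  assumes "s differentiable (at \<theta>)"
  shows "pderiv2 (\<lambda>u. bloch_rho (s u)) \<theta> i = (1/2::real) *\<^sub>R bl 0 (pderiv2 s \<theta> i)"
proof -
  have bl: "bounded_linear (\<lambda>y. (1/2::real) *\<^sub>R bl 0 y)"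
    using bl0_linear linear_conv_bounded_linear by blast
  have sd: "(s has_derivative frechet_derivative s (at \<theta>)) (at \<theta>)"
    using assms frechet_derivative_works by blast
  have "((\<lambda>u. (1/2::real) *\<^sub>R bl 0 (s u)) has_derivative
        (\<lambda>h. (1/2::real) *\<^sub>R bl 0 (frechet_derivative s (at \<theta>) h))) (at \<theta>)"
    using bounded_linear.has_derivative[OF bl sd] .
  then have "((\<lambda>u. bloch_rho (s u)) has_derivative
        (\<lambda>h. (1/2::real) *\<^sub>R bl 0 (frechet_derivative s (at \<theta>) h))) (at \<theta>)"
    unfolding rho_split add.commute[of "(1/2::real) *\<^sub>R mat 1"] by (rule has_derivative_add_const)
  then have "(\<lambda>h. (1/2::real) *\<^sub>R bl 0 (frechet_derivative s (at \<theta>) h))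
      = frechet_derivative (\<lambda>u. bloch_rho (s u)) (at \<theta>)"
    by (rule frechet_derivative_at)
  then show ?thesis unfolding pderiv2_def by metis
qed

theorem lemma2:
  fixes \<Theta> :: "(real^2) set" and s :: "real^2 \<Rightarrow> real^3"
    and \<theta> :: "real^2" and W :: "real^2^2"
  assumes "open \<Theta>" and "\<theta> \<in> \<Theta>"
    and "s differentiable_on \<Theta>"
    and "\<forall>t\<in>\<Theta>. norm (s t) < 1"
    and "\<forall>t\<in>\<Theta>. \<forall>a b::real.
           a *\<^sub>R pderiv2 (\<lambda>u. bloch_rho (s u)) t 1 + b *\<^sub>R pderiv2 (\<lambda>u. bloch_rho (s u)) t 2 = 0
           \<longrightarrow> a = 0 \<and> b = 0"
    and "transpose W = W" and "\<forall>x::real^2. x \<noteq> 0 \<longrightarrow> x \<bullet> (W *v x) > 0"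
  shows "\<exists>X0 \<xi>0.
           holevo_feasible (bloch_rho (s \<theta>)) (pderiv2 (\<lambda>u. bloch_rho (s u)) \<theta>) X0
         \<and> (\<forall>X. holevo_feasible (bloch_rho (s \<theta>)) (pderiv2 (\<lambda>u. bloch_rho (s u)) \<theta>) X
                \<longrightarrow> holevo_obj W (bloch_rho (s \<theta>)) X0 \<le> holevo_obj W (bloch_rho (s \<theta>)) X)
         \<and> (\<forall>\<xi>. hfun (s \<theta>) (pderiv2 s \<theta>) W \<xi>0 \<le> hfun (s \<theta>) (pderiv2 s \<theta>) W \<xi>)
         \<and> holevo_bound W (bloch_rho (s \<theta>)) (pderiv2 (\<lambda>u. bloch_rho (s u)) \<theta>)
             = hfun (s \<theta>) (pderiv2 s \<theta>) W \<xi>0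
         \<and> holevo_obj W (bloch_rho (s \<theta>)) X0 = hfun (s \<theta>) (pderiv2 s \<theta>) W \<xi>0"
proof -
  note assms' = assms
  let ?\<rho> = "bloch_rho (s \<theta>)"
  let ?d\<rho> = "pderiv2 (\<lambda>u. bloch_rho (s u)) \<theta>"
  define d where "d = pderiv2 s \<theta>"
  define l where "l = sld_dual (s \<theta>) d"
  define n where "n = lperp d"
  have sd: "s differentiable (at \<theta>)"
    using assms(1-3) differentiable_on_eq_differentiable_at by blast
  have drho: "?d\<rho> i = (1/2::real) *\<^sub>R bl 0 (d i)" for i
    unfolding d_def by (rule deriv_rho[OF sd])
  have ns: "norm (s \<theta>) < 1" using assms(2,4) by blast
  have ind: "\<forall>a b::real. a *\<^sub>R d 1 + b *\<^sub>R d 2 = 0 \<longrightarrow> a = 0 \<and> b = 0"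
  proof (intro allI impI)
    fix a b :: real assume h: "a *\<^sub>R d 1 + b *\<^sub>R d 2 = 0"
    have "a *\<^sub>R ?d\<rho> 1 + b *\<^sub>R ?d\<rho> 2 = (1/2::real) *\<^sub>R bl 0 (a *\<^sub>R d 1 + b *\<^sub>R d 2)"
      unfolding drho using linear_add[OF bl0_linear] linear_cmul[OF bl0_linear] by metis
    also have "\<dots> = 0" unfolding h using linear_0[OF bl0_linear] by simp
    finally show "a = 0 \<and> b = 0" using assms(2,5) by blast
  qed
  have Wf: "det W > 0" "W$1$1 > 0" "W$2$2 > 0"
    "\<And>x. (det W / (W$1$1 + W$2$2)) * (norm x)^2 \<le> x \<bullet> (W *v x)"
    using W_facts[OF assms(6,7)] by auto
  have nnz: "n \<noteq> 0" unfolding n_def by (rule n_nz[OF ns ind])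
  have Npos: "n \<bullet> Qinv (s \<theta>) n > 0" by (rule N_pos[OF ns nnz])
  let ?h = "hfun (s \<theta>) d W"
  let ?T = "trace (W ** matrix_inv (fisherG (s \<theta>) d))"
  let ?c = "det W / (W$1$1 + W$2$2)"
  have cpos: "?c > 0" using Wf by simp
  have hb: "?h x \<ge> ?T + (n \<bullet> Qinv (s \<theta>) n * ?c) * (norm x)^2" for x
  proof -
    have "n \<bullet> Qinv (s \<theta>) n * (?c * (norm x)^2) \<le> n \<bullet> Qinv (s \<theta>) n * (x \<bullet> (W *v x))"
      using Npos by (intro mult_left_mono[OF Wf(4)[of x]]) simp
    moreover have "0 \<le> 2 * sqrt (det W) * \<bar>sld_dual (s \<theta>) d 1 \<bullet> Fop (s \<theta>) (sld_dual (s \<theta>) d 2)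
        + (1 - (norm (s \<theta>))^2) * (gammav (s \<theta>) d \<bullet> x)\<bar>"
      using Wf(1) by simp
    ultimately show ?thesis unfolding hfun_def n_def by (simp add: algebra_simps)
  qed
  obtain \<xi>0 where xi0: "\<forall>x. ?h \<xi>0 \<le> ?h x"
    using min_exists[OF hfun_cont hb mult_pos_pos[OF Npos cpos]] by blast
  have objh: "holevo_obj W ?\<rho> X = ?h \<xi>"
    if "\<And>i. X i = bl (-(s \<theta> \<bullet> (l i + \<xi>$i *\<^sub>R n))) (l i + \<xi>$i *\<^sub>R n)" for X \<xi>
    using obj_eq_hfun[OF ns ind assms(6) _ that[unfolded l_def n_def]] Wf(1) by simp
  define X0 where "X0 i = bl (-(s \<theta> \<bullet> (l i + \<xi>0$i *\<^sub>R n))) (l i + \<xi>0$i *\<^sub>R n)" for i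
  have dn: "d i \<bullet> n = 0" for i
    unfolding n_def lperp_def using exhaust_2[of i] by (auto simp: dot_cross_self)
  have dl: "d i \<bullet> l j = (if i = j then 1 else 0)" for i j
    unfolding l_def by (rule d_l[OF ns ind])
  have feas0: "holevo_feasible ?\<rho> ?d\<rho> X0"
    unfolding holevo_feasible_def X0_def
    by (simp add: hermitian_bl trace_rho_bl drho trace_bl0_bl inner_add_right dn dl)
  have obj0: "holevo_obj W ?\<rho> X0 = ?h \<xi>0"
    by (rule objh) (simp add: X0_def)
  have low: "holevo_obj W ?\<rho> X0 \<le> holevo_obj W ?\<rho> X" if f: "holevo_feasible ?\<rho> ?d\<rho> X" for X
  proof -
    have "\<forall>i. \<exists>a v. X i = bl a v" using f hermitian_ex unfolding holevo_feasible_def by blast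
    then obtain a v where av: "\<And>i. X i = bl (a i) (v i)" by metis
    have a: "a i = - (s \<theta> \<bullet> v i)" for i
    proof -
      have "trace (?\<rho> ** X i) = 0" using f unfolding holevo_feasible_def by blast
      then have "complex_of_real (a i + s \<theta> \<bullet> v i) = 0" unfolding av trace_rho_bl .
      then show ?thesis by (simp only: of_real_eq_0_iff)
    qed
    have dv: "d i \<bullet> v j = (if i = j then 1 else 0)" for i j
    proof -
      have "trace (?d\<rho> i ** X j) = (if i = j then 1 else 0)" using f unfolding holevo_feasible_def by blast
      then show ?thesis unfolding av drho trace_bl0_bl by (simp split: if_splits)
    qed
    define \<xi> where "\<xi> = (\<chi> j. (n \<bullet> (v j - l j)) / (n \<bullet> n))"
    have vj: "v j = l j + \<xi>$j *\<^sub>R n" for j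
    proof -
      have "v j - l j = ((lperp d \<bullet> (v j - l j)) / (lperp d \<bullet> lperp d)) *\<^sub>R lperp d"
        by (rule perp_par[OF ns ind]) (simp_all add: inner_diff_right dv dl)
      then show ?thesis unfolding \<xi>_def n_def by (simp add: algebra_simps)
    qed
    have "holevo_obj W ?\<rho> X = ?h \<xi>"
      by (rule objh) (simp add: av a vj)
    then show ?thesis using obj0 xi0 by simp
  qed
  have bound: "holevo_bound W ?\<rho> ?d\<rho> = ?h \<xi>0"
    unfolding holevo_bound_def
  proof (rule cInf_eq_minimum)
    show "?h \<xi>0 \<in> {holevo_obj W ?\<rho> X |X. holevo_feasible ?\<rho> ?d\<rho> X}"
      using feas0 obj0[symmetric] by blast
    show "\<And>x. x \<in> {holevo_obj W ?\<rho> X |X. holevo_feasible ?\<rho> ?d\<rho> X} \<Longrightarrow> ?h \<xi>0 \<le> x"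
      using low obj0 by fastforce
  qed
  show ?thesis
    unfolding d_def[symmetric]
    apply (rule exI[of _ X0], rule exI[of _ \<xi>0])
    using feas0 low xi0 bound obj0 by simp
qed

end
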